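(* Let $(\tilde\Theta^n_I)$ be a congruent family of covariant $n$-tensor fields on $\mathcal M_+(I)$, $I$ ranging over finite sets, such that $(\tilde\Theta^n_I)_{\lambda c_I}=0$ for all finite sets $I$ and all $\lambda>0$. Then $\tilde\Theta^n_I=0$ for all finite sets $I$.
   Context: For a finite set $I$: $\mathcal S(I)=\{\sum_{i\in I}x_i\delta_i:x_i\in\mathbb R\}$, $\mathcal M_+(I)=\{\sum\mu_i\delta_i:\mu_i>0\}$ (tangent space $\mathcal S(I)$), $c_I:=\frac1{|I|}\sum_i\delta_i$. A covariant $n$-tensor field on $\mathcal M_+(I)$ is a continuously varying family of $n$-multilinear forms on $\mathcal S(I)$. A Markov kernel $K:I\to\mathcal P(I')$ between finite sets is a stochastic matrix $K(i)=\sum_{i'}K^i_{i'}\delta_{i'}$ with $K_*(\sum x_i\delta_i)=\sum_{i,i'}K^i_{i'}x_i\delta_{i'}$; it is congruent if there is a map $\kappa:I'\to I$ with $K^i_{i'}=0$ whenever $\kappa(i')\ne i$. The family is congruent if $(\tilde\Theta^n_{I'})_{K_*\mu}(K_*V_1,\dots,K_*V_n)=(\tilde\Theta^n_I)_\mu(V_1,\dots,V_n)$ for every congruent Markov kernel $K:I\to\mathcal P(I')$ between finite sets with $K_*(\mathcal M_+(I))\subset\mathcal M_+(I')$. *)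

theory Defs
  imports "HOL-Analysis.Analysis"
begin

text \<open>Finite sets I are finite sets of natural numbers. Signed measures / tangent vectors
  on I are functions nat => real vanishing outside I.\<close>

definition S_I :: "nat set \<Rightarrow> (nat \<Rightarrow> real) set" where
  "S_I I = {x. \<forall>i. i \<notin> I \<longrightarrow> x i = 0}"

definition Mplus :: "nat set \<Rightarrow> (nat \<Rightarrow> real) set" where
  "Mplus I = {\<mu>. (\<forall>i\<in>I. \<mu> i > 0) \<and> (\<forall>i. i \<notin> I \<longrightarrow> \<mu> i = 0)}"

definition cI :: "nat set \<Rightarrow> nat \<Rightarrow> real" where
  "cI I = (\<lambda>i. if i \<in> I then 1 / real (card I) else 0)"

definition markov_kernel :: "nat set \<Rightarrow> nat set \<Rightarrow> (nat \<Rightarrow> nat \<Rightarrow> real) \<Rightarrow> bool" where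
  "markov_kernel I I' K \<longleftrightarrow>
     (\<forall>i\<in>I. \<forall>i'\<in>I'. K i i' \<ge> 0) \<and> (\<forall>i\<in>I. (\<Sum>i'\<in>I'. K i i') = 1)"

definition congruent_kernel :: "nat set \<Rightarrow> nat set \<Rightarrow> (nat \<Rightarrow> nat \<Rightarrow> real) \<Rightarrow> bool" where
  "congruent_kernel I I' K \<longleftrightarrow> markov_kernel I I' K \<and>
     (\<exists>\<kappa>. \<kappa> ` I' \<subseteq> I \<and> (\<forall>i\<in>I. \<forall>i'\<in>I'. \<kappa> i' \<noteq> i \<longrightarrow> K i i' = 0))"

definition pushfwd :: "nat set \<Rightarrow> nat set \<Rightarrow> (nat \<Rightarrow> nat \<Rightarrow> real) \<Rightarrow> (nat \<Rightarrow> real) \<Rightarrow> nat \<Rightarrow> real" where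
  "pushfwd I I' K x = (\<lambda>i'. if i' \<in> I' then (\<Sum>i\<in>I. K i i' * x i) else 0)"

definition cov_tensor_field ::
  "nat \<Rightarrow> nat set \<Rightarrow> ((nat \<Rightarrow> real) \<Rightarrow> (nat \<Rightarrow> real) list \<Rightarrow> real) \<Rightarrow> bool" where
  "cov_tensor_field n I \<Theta> \<longleftrightarrow>
     (\<forall>Vs. length Vs = n \<and> set Vs \<subseteq> S_I I \<longrightarrow> continuous_on (Mplus I) (\<lambda>\<mu>. \<Theta> \<mu> Vs)) \<and>
     (\<forall>\<mu>\<in>Mplus I. \<forall>Vs. length Vs = n \<and> set Vs \<subseteq> S_I I \<longrightarrow>
        (\<forall>j<n. \<forall>x\<in>S_I I. \<forall>y\<in>S_I I. \<forall>a::real.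
           \<Theta> \<mu> (Vs[j := (\<lambda>i. a * x i + y i)]) = a * \<Theta> \<mu> (Vs[j := x]) + \<Theta> \<mu> (Vs[j := y])))"

definition congruent_family ::
  "nat \<Rightarrow> (nat set \<Rightarrow> (nat \<Rightarrow> real) \<Rightarrow> (nat \<Rightarrow> real) list \<Rightarrow> real) \<Rightarrow> bool" where
  "congruent_family n \<Theta> \<longleftrightarrow>
     (\<forall>I I' K. finite I \<and> finite I' \<and> congruent_kernel I I' K \<and>
        pushfwd I I' K ` Mplus I \<subseteq> Mplus I' \<longrightarrow>
        (\<forall>\<mu>\<in>Mplus I. \<forall>Vs. length Vs = n \<and> set Vs \<subseteq> S_I I \<longrightarrow>
           \<Theta> I' (pushfwd I I' K \<mu>) (map (pushfwd I I' K) Vs) = \<Theta> I \<mu> Vs))"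

end

theory Submission imports Defs begin

lemma fun_tendsto_comp:
  fixes g :: "'b \<Rightarrow> nat \<Rightarrow> real"
  assumes "\<And>i. ((\<lambda>m. g m i) \<longlongrightarrow> l i) F"
  shows "(g \<longlongrightarrow> l) F"
proof -
  have "limitin (product_topology (\<lambda>i. euclidean) UNIV) g l F"
    using assms by (simp add: limitin_componentwise)
  then show ?thesis by (metis euclidean_product_topology limitin_canonical_iff)
qed

lemma rational_zero:
  fixes n :: nat
    and \<Theta> :: "nat set \<Rightarrow> (nat \<Rightarrow> real) \<Rightarrow> (nat \<Rightarrow> real) list \<Rightarrow> real"
  assumes cong: "congruent_family n \<Theta>"
    and zero_at_center: "\<And>I (t::real) Vs. finite I \<Longrightarrow> t > 0 \<Longrightarrow> length Vs = n \<Longrightarrow>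
                 set Vs \<subseteq> S_I I \<Longrightarrow> \<Theta> I (\<lambda>i. t * cI I i) Vs = 0"
    and fin: "finite I" and ne: "I \<noteq> {}"
    and kpos: "\<And>i. i \<in> I \<Longrightarrow> k i > (0::nat)" and N: "N > (0::nat)"
    and Vs: "length Vs = n" "set Vs \<subseteq> S_I I"
  shows "\<Theta> I (\<lambda>i. if i \<in> I then real (k i) / real N else 0) Vs = 0"
proof -
  define \<mu> where "\<mu> = (\<lambda>i. if i \<in> I then real (k i) / real N else 0)"
  define Sg where "Sg = (SIGMA i:I. {..<k i})"
  define I' where "I' = prod_encode ` Sg"
  define K where "K = (\<lambda>i i'. if fst (prod_decode i') = i then 1 / real (k i) else (0::real))"
  have finSg: "finite Sg" unfolding Sg_def using fin by auto
  have fin': "finite I'" unfolding I'_def using finSg by auto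
  have inj: "inj_on prod_encode Sg" by (meson inj_on_def prod_encode_eq)
  have I'mem: "i' \<in> I' \<longleftrightarrow> fst (prod_decode i') \<in> I \<and> snd (prod_decode i') < k (fst (prod_decode i'))" for i'
  proof
    assume "i' \<in> I'"
    then obtain p where "p \<in> Sg" "i' = prod_encode p" unfolding I'_def by auto
    then show "fst (prod_decode i') \<in> I \<and> snd (prod_decode i') < k (fst (prod_decode i'))"
      unfolding Sg_def by auto
  next
    assume h: "fst (prod_decode i') \<in> I \<and> snd (prod_decode i') < k (fst (prod_decode i'))"
    have "prod_decode i' \<in> Sg" unfolding Sg_def using h by (cases "prod_decode i'") auto
    moreover have "i' = prod_encode (prod_decode i')" by simp
    ultimately show "i' \<in> I'" unfolding I'_def by blast
  qed
  obtain i0 where i0: "i0 \<in> I" using ne by auto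
  have "prod_encode (i0, 0) \<in> I'" using I'mem kpos[OF i0] i0 by simp
  then have ne': "I' \<noteq> {}" by auto
  have sumK: "(\<Sum>i'\<in>I'. K i i') = 1" if "i \<in> I" for i
  proof -
    have "(\<Sum>i'\<in>I'. K i i') = (\<Sum>p\<in>Sg. K i (prod_encode p))"
      unfolding I'_def by (rule sum.reindex[OF inj, unfolded comp_def])
    also have "\<dots> = (\<Sum>a\<in>I. \<Sum>j<k a. K i (prod_encode (a, j)))"
      unfolding Sg_def using fin by (subst sum.Sigma) (auto simp: split_def)
    also have "\<dots> = (\<Sum>a\<in>I. \<Sum>j<k a. if a = i then 1 / real (k i) else 0)"
      unfolding K_def by simp
    also have "\<dots> = (\<Sum>j<k i. 1 / real (k i))"
      using that fin by (simp add: sum.delta' if_distrib cong: if_cong)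
    also have "\<dots> = 1" using kpos[OF that] by simp
    finally show ?thesis .
  qed
  have ck: "congruent_kernel I I' K"
    unfolding congruent_kernel_def markov_kernel_def
  proof (intro conjI ballI exI[of _ "\<lambda>i'. fst (prod_decode i')"])
    show "0 \<le> K i i'" for i i' unfolding K_def by simp
    show "(\<Sum>i'\<in>I'. K i i') = 1" if "i \<in> I" for i using sumK that .
    show "(\<lambda>i'. fst (prod_decode i')) ` I' \<subseteq> I" using I'mem by auto
  qed (auto simp: K_def)
  have pf: "pushfwd I I' K \<nu> i' = (if i' \<in> I' then \<nu> (fst (prod_decode i')) / real (k (fst (prod_decode i'))) else 0)" for \<nu> i'
  proof (cases "i' \<in> I'")
    case True
    then have a: "fst (prod_decode i') \<in> I" using I'mem by auto
    have "(\<Sum>i\<in>I. K i i' * \<nu> i) = (\<Sum>i\<in>I. if fst (prod_decode i') = i then \<nu> i / real (k i) else 0)"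
      unfolding K_def by (rule sum.cong) auto
    also have "\<dots> = \<nu> (fst (prod_decode i')) / real (k (fst (prod_decode i')))"
      using a fin by (simp add: sum.delta)
    finally show ?thesis using True by (simp add: pushfwd_def)
  qed (simp add: pushfwd_def)
  have mp: "pushfwd I I' K ` Mplus I \<subseteq> Mplus I'"
  proof
    fix x assume "x \<in> pushfwd I I' K ` Mplus I"
    then obtain \<nu> where \<nu>: "\<nu> \<in> Mplus I" and x: "x = pushfwd I I' K \<nu>" by auto
    show "x \<in> Mplus I'" unfolding Mplus_def
    proof (intro CollectI conjI allI ballI impI)
      fix i' assume "i' \<in> I'"
      then have "fst (prod_decode i') \<in> I" using I'mem by auto
      then show "x i' > 0" using \<nu> kpos unfolding x pf Mplus_def using \<open>i' \<in> I'\<close> by auto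
    qed (simp add: x pf)
  qed
  have muM: "\<mu> \<in> Mplus I" unfolding Mplus_def \<mu>_def using kpos N by auto
  have eq: "\<Theta> I' (pushfwd I I' K \<mu>) (map (pushfwd I I' K) Vs) = \<Theta> I \<mu> Vs"
    using cong fin fin' ck mp muM Vs unfolding congruent_family_def by blast
  define t where "t = real (card I') / real N"
  have cardpos: "card I' > 0" using fin' ne' by (simp add: card_gt_0_iff)
  have tpos: "t > 0" unfolding t_def using cardpos N by simp
  have pfmu: "pushfwd I I' K \<mu> = (\<lambda>i. t * cI I' i)"
  proof
    fix i'
    show "pushfwd I I' K \<mu> i' = t * cI I' i'"
    proof (cases "i' \<in> I'")
      case True
      then have a: "fst (prod_decode i') \<in> I" using I'mem by auto
      then show ?thesis using True kpos[OF a] cardpos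
        by (simp add: pf \<mu>_def t_def cI_def)
    qed (simp add: pf cI_def)
  qed
  have Vs': "set (map (pushfwd I I' K) Vs) \<subseteq> S_I I'" by (auto simp: S_I_def pushfwd_def)
  have "\<Theta> I' (pushfwd I I' K \<mu>) (map (pushfwd I I' K) Vs) = 0"
    unfolding pfmu using zero_at_center[OF fin' tpos _ Vs'] Vs by simp
  then show ?thesis using eq \<mu>_def by simp
qed

lemma ceil_approx:
  fixes x :: real assumes "x > 0"
  shows "(\<lambda>m. real (nat \<lceil>real (Suc m) * x\<rceil>) / real (Suc m)) \<longlonglongrightarrow> x"
proof (rule tendsto_sandwich[where f="\<lambda>m. x" and h="\<lambda>m. x + 1 / real (Suc m)"])
  have c: "real (nat \<lceil>real (Suc m) * x\<rceil>) = of_int \<lceil>real (Suc m) * x\<rceil>" for m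
    using assms by (simp add: mult_pos_pos)
  show "\<forall>\<^sub>F m in sequentially. x \<le> real (nat \<lceil>real (Suc m) * x\<rceil>) / real (Suc m)"
  proof (intro always_eventually allI)
    fix m
    have "real (Suc m) * x \<le> of_int \<lceil>real (Suc m) * x\<rceil>" by (rule le_of_int_ceiling)
    then show "x \<le> real (nat \<lceil>real (Suc m) * x\<rceil>) / real (Suc m)"
      unfolding c by (simp add: field_simps)
  qed
  show "\<forall>\<^sub>F m in sequentially. real (nat \<lceil>real (Suc m) * x\<rceil>) / real (Suc m) \<le> x + 1 / real (Suc m)"
  proof (intro always_eventually allI)
    fix m
    have "of_int \<lceil>real (Suc m) * x\<rceil> < real (Suc m) * x + 1" using ceiling_correct[of "real (Suc m) * x"] by linarith
    then have "of_int \<lceil>real (Suc m) * x\<rceil> / real (Suc m) \<le> (real (Suc m) * x + 1) / real (Suc m)"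
      by (intro divide_right_mono) auto
    also have "\<dots> = x + 1 / real (Suc m)" by (simp add: add_divide_distrib)
    finally show "real (nat \<lceil>real (Suc m) * x\<rceil>) / real (Suc m) \<le> x + 1 / real (Suc m)"
      unfolding c .
  qed
  show "(\<lambda>m. x) \<longlonglongrightarrow> x" by simp
  have "(\<lambda>m. 1 / real (Suc m)) \<longlonglongrightarrow> 0"
    using LIMSEQ_Suc[OF lim_const_over_n[of 1]] by simp
  then show "(\<lambda>m. x + 1 / real (Suc m)) \<longlonglongrightarrow> x"
    using tendsto_add[OF tendsto_const[of x]] by fastforce
qed

theorem lemma4p8:
  fixes n :: nat
    and \<Theta> :: "nat set \<Rightarrow> (nat \<Rightarrow> real) \<Rightarrow> (nat \<Rightarrow> real) list \<Rightarrow> real"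
  assumes fields: "\<And>I. finite I \<Longrightarrow> cov_tensor_field n I (\<Theta> I)"
    and cong: "congruent_family n \<Theta>"
    and zero_at_center: "\<And>I (t::real) Vs. finite I \<Longrightarrow> t > 0 \<Longrightarrow> length Vs = n \<Longrightarrow>
                 set Vs \<subseteq> S_I I \<Longrightarrow> \<Theta> I (\<lambda>i. t * cI I i) Vs = 0"
  shows "\<forall>I. finite I \<longrightarrow> (\<forall>\<mu>\<in>Mplus I. \<forall>Vs. length Vs = n \<and> set Vs \<subseteq> S_I I \<longrightarrow> \<Theta> I \<mu> Vs = 0)"
proof (intro allI impI ballI)
  fix I \<mu> Vs
  assume fin: "finite I" and mu: "\<mu> \<in> Mplus I" and Vs: "length Vs = n \<and> set Vs \<subseteq> S_I I"
  show "\<Theta> I \<mu> Vs = 0"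
  proof (cases "I = {}")
    case True
    then have "\<mu> = (\<lambda>i. 1 * cI I i)" using mu by (auto simp: Mplus_def cI_def)
    then show ?thesis using zero_at_center[OF fin, of 1 Vs] Vs by simp
  next
    case ne: False
    define g where "g = (\<lambda>m i. if i \<in> I then real (nat \<lceil>real (Suc m) * \<mu> i\<rceil>) / real (Suc m) else 0)"
    have pos: "\<And>i. i \<in> I \<Longrightarrow> \<mu> i > 0" using mu by (auto simp: Mplus_def)
    have g0: "\<Theta> I (g m) Vs = 0" for m
      unfolding g_def
    proof (rule rational_zero[OF cong zero_at_center fin ne])
      show "0 < nat \<lceil>real (Suc m) * \<mu> i\<rceil>" if "i \<in> I" for i
        using pos[OF that] by (simp add: mult_pos_pos)
    qed (use Vs in auto)
    have gM: "g m \<in> Mplus I" for m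
      using pos by (auto simp: g_def Mplus_def mult_pos_pos)
    have glim: "g \<longlonglongrightarrow> \<mu>"
    proof (rule fun_tendsto_comp)
      fix i
      show "(\<lambda>m. g m i) \<longlonglongrightarrow> \<mu> i"
      proof (cases "i \<in> I")
        case True
        then show ?thesis using ceil_approx[OF pos[OF True]] by (simp add: g_def)
      next
        case False
        then show ?thesis using mu by (simp add: g_def Mplus_def)
      qed
    qed
    have "continuous_on (Mplus I) (\<lambda>\<nu>. \<Theta> I \<nu> Vs)"
      using fields[OF fin] Vs unfolding cov_tensor_field_def by blast
    from continuous_on_tendsto_compose[OF this glim mu] gM
    have "(\<lambda>m. \<Theta> I (g m) Vs) \<longlonglongrightarrow> \<Theta> I \<mu> Vs" by simp
    then have "(\<lambda>m. 0::real) \<longlonglongrightarrow> \<Theta> I \<mu> Vs" using g0 by simp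
    then show ?thesis using LIMSEQ_unique[OF _ tendsto_const] by metis
  qed
qed

end
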